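(* Let $F$ be a dill map with diameter $\delta$ and local rule $f$, and let $M,M'\in\mathbb N$ be such that for every $u\in A^*$ and every $j\in\{0,\dots,|u|-1\}$, $d_L(f^*(D_j(u)),f^*(u))\le M+\frac{|f^*(u)|-|f^*(D_j(u))|}{2}$ and $d_L(f^*(D_j(u)),f^*(u))\le M'-\frac{|f^*(u)|-|f^*(D_j(u))|}{2}$. Let $L>0$ and let $x\in A^{\mathbb N}$ be such that $|f(x_{[i,i+\delta)})|\ge L$ for every $i\in\mathbb N$. Then for every $y\in A^{\mathbb N}$, $\mathfrak d_L(F(x),F(y))\le\frac{M+M'}{L}\,\mathfrak d_L(x,y)$.
   Context: $A$ is a finite alphabet, $A^*$ the finite words, $A^+$ the nonempty finite words, $u_{[i,j)}=u_i\cdots u_{j-1}$. A dill map with diameter $\delta\ge1$ has local rule $f:A^\delta\to A^+$ and is $F(x)=f(x_{[0,\delta)})f(x_{[1,\delta+1)})\cdots$. $f^*(u)=f(u_{[0,\delta)})f(u_{[1,\delta+1)})\cdots f(u_{[|u|-\delta,|u|)})$ if $|u|\ge\delta$, and the empty word otherwise. $D_j(u)$ is $u$ with its letter at position $j$ deleted. The Levenshtein distance is $d_L(u,v)=\frac{|u|+|v|}{2}-\ell$, $\ell$ the length of a longest common subsequence. The Feldman pseudo-metric is $\mathfrak d_L(x,y)=\limsup_{l\to\infty}d_L(x_{[0,l)},y_{[0,l)})/l$. *)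

theory Defs
  imports Complex_Main "HOL-Library.Sublist" "HOL-Library.Liminf_Limsup" "HOL-Library.Extended_Real"
begin

definition window :: "nat \<Rightarrow> (nat \<Rightarrow> 'a) \<Rightarrow> nat \<Rightarrow> 'a list" where
  "window \<delta> x i = map (\<lambda>k. x (i + k)) [0..<\<delta>]"

definition pref :: "(nat \<Rightarrow> 'a) \<Rightarrow> nat \<Rightarrow> 'a list" where
  "pref x l = map x [0..<l]"

definition dill_blocks :: "nat \<Rightarrow> ('a list \<Rightarrow> 'b list) \<Rightarrow> (nat \<Rightarrow> 'a) \<Rightarrow> nat \<Rightarrow> 'b list" where
  "dill_blocks \<delta> f x k = concat (map (\<lambda>i. f (window \<delta> x i)) [0..<k])"

text \<open>F(x) = f(x_[0,delta)) f(x_[1,delta+1)) ...; its n-th letter lies in the first n+1 blocks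
  since every block is nonempty.\<close>
definition dill :: "nat \<Rightarrow> ('a list \<Rightarrow> 'b list) \<Rightarrow> (nat \<Rightarrow> 'a) \<Rightarrow> nat \<Rightarrow> 'b" where
  "dill \<delta> f x n = dill_blocks \<delta> f x (Suc n) ! n"

definition fstar :: "nat \<Rightarrow> ('a list \<Rightarrow> 'b list) \<Rightarrow> 'a list \<Rightarrow> 'b list" where
  "fstar \<delta> f u = (if \<delta> \<le> length u
     then concat (map (\<lambda>i. f (take \<delta> (drop i u))) [0..<length u - \<delta> + 1]) else [])"

definition Del :: "nat \<Rightarrow> 'a list \<Rightarrow> 'a list" where
  "Del j u = take j u @ drop (Suc j) u"

definition lcs_len :: "'a list \<Rightarrow> 'a list \<Rightarrow> nat" where
  "lcs_len u v = Max {length w | w. subseq w u \<and> subseq w v}"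

definition lev :: "'a list \<Rightarrow> 'a list \<Rightarrow> real" where
  "lev u v = (real (length u) + real (length v)) / 2 - real (lcs_len u v)"

definition feldman :: "(nat \<Rightarrow> 'a) \<Rightarrow> (nat \<Rightarrow> 'a) \<Rightarrow> ereal" where
  "feldman x y = limsup (\<lambda>l. ereal (lev (pref x l) (pref y l) / real l))"

end

theory Submission imports Defs begin

lemma lcs_set_finite: "finite {length w | w. subseq w u \<and> subseq w v}"
proof -
  have "{length w | w. subseq w u \<and> subseq w v} \<subseteq> {..length u}"
    by (auto dest: list_emb_length)
  then show ?thesis by (rule finite_subset) simp
qed

lemma lcs_ge: "subseq w u \<Longrightarrow> subseq w v \<Longrightarrow> length w \<le> lcs_len u v"
  unfolding lcs_len_def by (rule Max_ge[OF lcs_set_finite]) blast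

lemma lcs_ex: "\<exists>w. subseq w u \<and> subseq w v \<and> length w = lcs_len u v"
proof -
  have "lcs_len u v \<in> {length w | w. subseq w u \<and> subseq w v}"
    unfolding lcs_len_def by (rule Max_in[OF lcs_set_finite]) (auto intro!: exI[of _ "[]"])
  then show ?thesis by auto
qed

lemma lcs_sym: "lcs_len u v = lcs_len v u"
  unfolding lcs_len_def by metis

lemma lev_sym: "lev u v = lev v u"
  unfolding lev_def by (simp add: lcs_sym add.commute)

lemma merge_subseq:
  "subseq s1 v \<Longrightarrow> subseq s2 v \<Longrightarrow>
     \<exists>s. subseq s s1 \<and> subseq s s2 \<and> length s1 + length s2 \<le> length s + length v"
proof (induction v arbitrary: s1 s2)
  case Nil then show ?case by auto
next
  case (Cons a v)
  have c1: "subseq s1 v \<or> (\<exists>s1'. s1 = a # s1' \<and> subseq s1' v)"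
    using Cons.prems(1) by (cases s1) (auto split: if_splits)
  have c2: "subseq s2 v \<or> (\<exists>s2'. s2 = a # s2' \<and> subseq s2' v)"
    using Cons.prems(2) by (cases s2) (auto split: if_splits)
  show ?case
  proof (cases "subseq s1 v")
    case T1: True
    show ?thesis
    proof (cases "subseq s2 v")
      case True
      with T1 Cons.IH show ?thesis by fastforce
    next
      case False
      then obtain s2' where s2: "s2 = a # s2'" "subseq s2' v" using c2 by blast
      from Cons.IH[OF T1 s2(2)] obtain s where "subseq s s1" "subseq s s2'"
        "length s1 + length s2' \<le> length s + length v" by blast
      then show ?thesis using s2 by (intro exI[of _ s]) auto
    qed
  next
    case F1: False
    then obtain s1' where s1: "s1 = a # s1'" "subseq s1' v" using c1 by blast
    show ?thesis
    proof (cases "subseq s2 v")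
      case True
      from Cons.IH[OF s1(2) True] obtain s where "subseq s s1'" "subseq s s2"
        "length s1' + length s2 \<le> length s + length v" by blast
      then show ?thesis using s1 by (intro exI[of _ s]) auto
    next
      case False
      then obtain s2' where s2: "s2 = a # s2'" "subseq s2' v" using c2 by blast
      from Cons.IH[OF s1(2) s2(2)] obtain s where "subseq s s1'" "subseq s s2'"
        "length s1' + length s2' \<le> length s + length v" by blast
      then show ?thesis using s1 s2 by (intro exI[of _ "a # s"]) auto
    qed
  qed
qed

lemma subseq_trans': "subseq a b \<Longrightarrow> subseq b c \<Longrightarrow> subseq a c"
  by (rule list_emb_trans) auto

lemma lcs_tri: "lcs_len u v + lcs_len v w \<le> lcs_len u w + length v"
proof -
  obtain s1 where s1: "subseq s1 u" "subseq s1 v" "length s1 = lcs_len u v" using lcs_ex by blast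
  obtain s2 where s2: "subseq s2 v" "subseq s2 w" "length s2 = lcs_len v w" using lcs_ex by blast
  obtain s where s: "subseq s s1" "subseq s s2" "length s1 + length s2 \<le> length s + length v"
    using merge_subseq[OF s1(2) s2(1)] by blast
  have "length s \<le> lcs_len u w"
    using s s1 s2 by (intro lcs_ge) (blast intro: subseq_trans')+
  then show ?thesis using s s1 s2 by linarith
qed

lemma lev_tri: "lev u w \<le> lev u v + lev v w"
  using lcs_tri[of u v w] unfolding lev_def by (simp add: field_simps)

lemma lev_refl: "lev u u = 0"
proof -
  have "lcs_len u u \<le> length u" using lcs_ex[of u u] by (auto dest: list_emb_length)
  moreover have "length u \<le> lcs_len u u" by (rule lcs_ge) auto
  ultimately show ?thesis unfolding lev_def by simp
qed

lemma lev_prefix: "prefix p q \<Longrightarrow> lev p q \<le> (real (length q) - real (length p)) / 2"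
proof -
  assume "prefix p q"
  then have "length p \<le> lcs_len p q" by (intro lcs_ge) auto
  then show ?thesis unfolding lev_def by (simp add: field_simps)
qed

lemma lev_prefix_abs: "prefix p q \<or> prefix q p \<Longrightarrow>
   lev p q \<le> \<bar>real (length q) - real (length p)\<bar> / 2"
  using lev_prefix[of p q] lev_prefix[of q p] lev_sym[of p q] by auto

lemma lev_ge0: "0 \<le> lev u v"
proof -
  obtain s where "subseq s u" "subseq s v" "length s = lcs_len u v" using lcs_ex by blast
  then show ?thesis unfolding lev_def by (auto dest!: list_emb_length)
qed

lemma lev_le_len: "length u = l \<Longrightarrow> length v = l \<Longrightarrow> lev u v \<le> l"
  unfolding lev_def by simp


lemma Del_Cons0: "Del 0 (a # u) = u" by (simp add: Del_def)
lemma Del_ConsS: "Del (Suc j) (a # u) = a # Del j u" by (simp add: Del_def)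
lemma length_Del: "j < length u \<Longrightarrow> length (Del j u) = length u - 1"
  by (simp add: Del_def)

lemma subseq_Del: "subseq w u \<Longrightarrow> length w < length u \<Longrightarrow> \<exists>j<length u. subseq w (Del j u)"
proof (induction u arbitrary: w)
  case Nil then show ?case by simp
next
  case (Cons a u)
  show ?case
  proof (cases "subseq w u")
    case True then show ?thesis by (intro exI[of _ 0]) (simp add: Del_Cons0)
  next
    case False
    then obtain w' where w: "w = a # w'" "subseq w' u"
      using Cons.prems(1) by (cases w) (auto split: if_splits)
    then have "length w' < length u" using Cons.prems(2) by simp
    from Cons.IH[OF w(2) this] obtain j where "j < length u" "subseq w' (Del j u)" by blast
    then show ?thesis using w by (intro exI[of _ "Suc j"]) (simp add: Del_ConsS)
  qed
qed

lemma path: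
  fixes f :: "'a list \<Rightarrow> 'b list"
  assumes b1: "\<And>u j. j < length u \<Longrightarrow>
       lev (fstar \<delta> f (Del j u)) (fstar \<delta> f u)
         \<le> real M + (real (length (fstar \<delta> f u)) - real (length (fstar \<delta> f (Del j u)))) / 2"
    and b2: "\<And>u j. j < length u \<Longrightarrow>
       lev (fstar \<delta> f (Del j u)) (fstar \<delta> f u)
         \<le> real M' - (real (length (fstar \<delta> f u)) - real (length (fstar \<delta> f (Del j u)))) / 2"
  shows "subseq w u \<Longrightarrow>
    lev (fstar \<delta> f w) (fstar \<delta> f u) \<le> real (length u - length w) * M
        + (real (length (fstar \<delta> f u)) - real (length (fstar \<delta> f w))) / 2 \<and>
    lev (fstar \<delta> f w) (fstar \<delta> f u) \<le> real (length u - length w) * M'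
        - (real (length (fstar \<delta> f u)) - real (length (fstar \<delta> f w))) / 2"
proof (induction "length u - length w" arbitrary: u)
  case 0
  then have "w = u" using subseq_same_length list_emb_length by (metis diff_is_0_eq le_antisym)
  then show ?case by (simp add: lev_refl)
next
  case (Suc n)
  then have "length w < length u" by simp
  from subseq_Del[OF Suc.prems this] obtain j where j: "j < length u" "subseq w (Del j u)" by blast
  have n: "n = length (Del j u) - length w" using Suc.hyps(2) j(1) by (simp add: length_Del)
  note IH = Suc.hyps(1)[OF n j(2)]
  have t: "lev (fstar \<delta> f w) (fstar \<delta> f u) \<le> lev (fstar \<delta> f w) (fstar \<delta> f (Del j u))
     + lev (fstar \<delta> f (Del j u)) (fstar \<delta> f u)" by (rule lev_tri)
  have r: "real (length u - length w) = real (length (Del j u) - length w) + 1"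
    using n Suc.hyps(2) by simp
  show ?case using IH t b1[OF j(1)] b2[OF j(1)] unfolding r by (simp add: algebra_simps) (elim conjE, intro conjI impI; argo)
qed

lemma common:
  fixes f :: "'a list \<Rightarrow> 'b list"
  assumes b1: "\<And>u j. j < length u \<Longrightarrow>
       lev (fstar \<delta> f (Del j u)) (fstar \<delta> f u)
         \<le> real M + (real (length (fstar \<delta> f u)) - real (length (fstar \<delta> f (Del j u)))) / 2"
    and b2: "\<And>u j. j < length u \<Longrightarrow>
       lev (fstar \<delta> f (Del j u)) (fstar \<delta> f u)
         \<le> real M' - (real (length (fstar \<delta> f u)) - real (length (fstar \<delta> f (Del j u)))) / 2"
    and lu: "length u = l" and lv: "length v = l"
  shows "lev (fstar \<delta> f u) (fstar \<delta> f v) \<le> lev u v * (real M + real M')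
     - \<bar>real (length (fstar \<delta> f u)) - real (length (fstar \<delta> f v))\<bar> / 2"
proof -
  obtain w where w: "subseq w u" "subseq w v" "length w = lcs_len u v" using lcs_ex by blast
  have wl: "length w \<le> l" using w(1) lu list_emb_length by blast
  have e: "lev u v = real (l - length w)" unfolding lev_def using lu lv w(3) wl by simp
  note p1 = path[OF b1 b2 w(1)] and p2 = path[OF b1 b2 w(2)]
  have t: "lev (fstar \<delta> f u) (fstar \<delta> f v) \<le> lev (fstar \<delta> f w) (fstar \<delta> f u)
     + lev (fstar \<delta> f w) (fstar \<delta> f v)" using lev_tri lev_sym by metis
  show ?thesis using t p1 p2 unfolding e lu lv by (simp add: algebra_simps abs_if) (elim conjE, intro conjI impI; argo)
qed


lemma prefix_nth: "prefix p q \<Longrightarrow> i < length p \<Longrightarrow> p ! i = q ! i"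
  by (auto simp: prefix_def nth_append)

lemma blocks_Suc: "dill_blocks \<delta> f x (Suc k) = dill_blocks \<delta> f x k @ f (window \<delta> x k)"
  by (simp add: dill_blocks_def)

lemma blocks_prefix: "k \<le> k' \<Longrightarrow> prefix (dill_blocks \<delta> f x k) (dill_blocks \<delta> f x k')"
proof (induction k' rule: dec_induct)
  case base then show ?case by simp
next
  case (step m) then show ?case by (simp add: blocks_Suc prefix_def) (metis append.assoc)
qed

lemma length_window: "length (window \<delta> x i) = \<delta>"
  by (simp add: window_def)

lemma blocks_len_ge:
  assumes ne: "\<And>w. length w = \<delta> \<Longrightarrow> f w \<noteq> []"
  shows "k \<le> length (dill_blocks \<delta> f x k)"
proof (induction k)
  case 0 then show ?case by (simp add: dill_blocks_def)
next
  case (Suc k)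
  have "f (window \<delta> x k) \<noteq> []" using ne length_window by blast
  then have "1 \<le> length (f (window \<delta> x k))" by (cases "f (window \<delta> x k)") auto
  then show ?case using Suc by (simp add: blocks_Suc)
qed

lemma dill_nth:
  assumes ne: "\<And>w. length w = \<delta> \<Longrightarrow> f w \<noteq> []"
    and n: "n < length (dill_blocks \<delta> f x k)"
  shows "dill \<delta> f x n = dill_blocks \<delta> f x k ! n"
proof -
  let ?m = "max k (Suc n)"
  have p1: "prefix (dill_blocks \<delta> f x k) (dill_blocks \<delta> f x ?m)" by (rule blocks_prefix) simp
  have p2: "prefix (dill_blocks \<delta> f x (Suc n)) (dill_blocks \<delta> f x ?m)" by (rule blocks_prefix) simp
  have "Suc n \<le> length (dill_blocks \<delta> f x (Suc n))" using blocks_len_ge ne by blast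
  then have "n < length (dill_blocks \<delta> f x (Suc n))" by simp
  then show ?thesis unfolding dill_def using prefix_nth[OF p1 n] prefix_nth[OF p2] by simp
qed

lemma pref_dill:
  assumes ne: "\<And>w. length w = \<delta> \<Longrightarrow> f w \<noteq> []"
    and n: "n \<le> length (dill_blocks \<delta> f x k)"
  shows "pref (dill \<delta> f x) n = take n (dill_blocks \<delta> f x k)"
  using n by (intro nth_equalityI) (auto simp: pref_def dill_nth[OF ne])

lemma pref_prefix: "m \<le> n \<Longrightarrow> prefix (pref z m) (pref z n)"
proof -
  assume "m \<le> n"
  then have "[0..<n] = [0..<m] @ [m..<n]" by (metis le0 upt_add_eq_append le_add_diff_inverse)
  then show ?thesis by (simp add: pref_def prefix_def)
qed

lemma length_pref[simp]: "length (pref z n) = n" by (simp add: pref_def)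

lemma fstar_pref:
  assumes d: "\<delta> \<ge> 1"
  shows "fstar \<delta> f (pref x (k + \<delta> - 1)) = dill_blocks \<delta> f x k"
proof (cases k)
  case 0 then show ?thesis using d by (simp add: fstar_def dill_blocks_def)
next
  case (Suc k')
  then have le: "\<delta> \<le> k + \<delta> - 1" using d by simp
  have r: "k + \<delta> - 1 - \<delta> + 1 = k" using Suc d by simp
  have w: "take \<delta> (drop i (pref x (k + \<delta> - Suc 0))) = window \<delta> x i" if "i < k" for i
    using that Suc d by (intro nth_equalityI) (auto simp: pref_def window_def)
  have m: "map (\<lambda>i. f (take \<delta> (drop i (pref x (k + \<delta> - Suc 0))))) [0..<k]
      = map (\<lambda>i. f (window \<delta> x i)) [0..<k]"
    by (rule map_cong) (auto simp: w)
  show ?thesis unfolding fstar_def dill_blocks_def using le r by (simp add: m del: map_eq_conv)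
qed


lemma step_lemma: "m \<le> n \<Longrightarrow>
  lev (pref X n) (pref Y n) \<le> lev (pref X m) (pref Y m) + (real n - real m)"
proof -
  assume mn: "m \<le> n"
  have t: "lev (pref X n) (pref Y n) \<le> lev (pref X n) (pref X m) + (lev (pref X m) (pref Y m) + lev (pref Y m) (pref Y n))"
    by (meson add_left_mono lev_tri order_trans)
  have a: "lev (pref X n) (pref X m) \<le> (real n - real m) / 2"
    using lev_prefix[OF pref_prefix[OF mn, of X]] lev_sym by (metis length_pref)
  have b: "lev (pref Y m) (pref Y n) \<le> (real n - real m) / 2"
    using lev_prefix[OF pref_prefix[OF mn, of Y]] by simp
  show ?thesis using t a b by argo
qed

lemma bracket:
  fixes N :: "nat \<Rightarrow> nat"
  assumes "N 0 = 0" and "\<And>k. N k < N (Suc k)"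
  shows "\<exists>k. N k \<le> n \<and> n < N (Suc k)"
proof (induction n)
  case 0 then show ?case using assms(1) assms(2)[of 0] by (intro exI[of _ 0]) auto
next
  case (Suc n)
  then obtain k where k: "N k \<le> n" "n < N (Suc k)" by blast
  show ?case
  proof (cases "Suc n < N (Suc k)")
    case True then show ?thesis using k by (intro exI[of _ k]) auto
  next
    case False
    then have "N (Suc k) = Suc n" using k by simp
    then show ?thesis using assms(2)[of "Suc k"] by (intro exI[of _ "Suc k"]) auto
  qed
qed


theorem lemmal:
  fixes f :: "'a::finite list \<Rightarrow> 'a list" and \<delta> M M' :: nat and L :: real
    and x y :: "nat \<Rightarrow> 'a"
  assumes diam: "\<delta> \<ge> 1"
    and nonempty: "\<And>w. length w = \<delta> \<Longrightarrow> f w \<noteq> []"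
    and bound1: "\<And>u j. j < length u \<Longrightarrow>
       lev (fstar \<delta> f (Del j u)) (fstar \<delta> f u)
         \<le> real M + (real (length (fstar \<delta> f u)) - real (length (fstar \<delta> f (Del j u)))) / 2"
    and bound2: "\<And>u j. j < length u \<Longrightarrow>
       lev (fstar \<delta> f (Del j u)) (fstar \<delta> f u)
         \<le> real M' - (real (length (fstar \<delta> f u)) - real (length (fstar \<delta> f (Del j u)))) / 2"
    and Lpos: "L > 0"
    and xlen: "\<And>i. real (length (f (window \<delta> x i))) \<ge> L"
  shows "feldman (dill \<delta> f x) (dill \<delta> f y) \<le> ereal ((real M + real M') / L) * feldman x y"
proof -
  define X where "X = dill \<delta> f x"
  define Y where "Y = dill \<delta> f y"
  define Nx where "Nx k = length (dill_blocks \<delta> f x k)" for k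
  define e where "e l = lev (pref x l) (pref y l)" for l
  define D where "D n = lev (pref X n) (pref Y n)" for n
  define S where "S = real M + real M'"
  define c where "c = S / L"
  have S0: "S \<ge> 0" unfolding S_def by simp
  have c0: "c \<ge> 0" unfolding c_def using S0 Lpos by simp
  define K where "K = Max ((\<lambda>w. length (f w)) ` {w. length w = \<delta>})"
  have fin: "finite {w::'a list. length w = \<delta>}"
    using finite_lists_length_eq[OF finite_UNIV, of \<delta>] by simp
  have Kb: "length (f (window \<delta> x i)) \<le> K" for i
    unfolding K_def using fin length_window by (intro Max_ge) auto
  have K1: "1 \<le> K"
  proof -
    have "f (window \<delta> x 0) \<noteq> []" using nonempty length_window by blast
    then show ?thesis using Kb[of 0] by (cases "f (window \<delta> x 0)") auto
  qed
  have NSuc: "Nx (Suc k) = Nx k + length (f (window \<delta> x k))" for k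
    unfolding Nx_def by (simp add: blocks_Suc)
  have Nzero: "Nx 0 = 0" unfolding Nx_def by (simp add: dill_blocks_def)
  have Nstrict: "Nx k < Nx (Suc k)" for k
  proof -
    have "f (window \<delta> x k) \<noteq> []" using nonempty length_window by blast
    then show ?thesis unfolding NSuc by simp
  qed
  have Nlow: "L * real k \<le> real (Nx k)" for k
  proof (induction k)
    case 0 then show ?case by (simp add: Nzero)
  next
    case (Suc k) then show ?case using xlen[of k] by (simp add: NSuc algebra_simps)
  qed
  have Nup: "Nx k \<le> K * k" for k
  proof (induction k)
    case 0 then show ?case by (simp add: Nzero)
  next
    case (Suc k) then show ?case using Kb[of k] by (simp add: NSuc)
  qed
  have key: "D (Nx k) \<le> e (k + \<delta> - 1) * S" for k
  proof -
    define l where "l = k + \<delta> - 1"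
    define a where "a = dill_blocks \<delta> f x k"
    define b where "b = dill_blocks \<delta> f y k"
    define n where "n = Nx k"
    define m where "m = max k n"
    have pa: "pref X n = a" unfolding X_def a_def n_def Nx_def
      using pref_dill[where f=f and \<delta>=\<delta> and n="length (dill_blocks \<delta> f x k)" and x=x and k=k, OF nonempty] by simp
    have lm: "n \<le> length (dill_blocks \<delta> f y m)"
      using blocks_len_ge[where f=f and \<delta>=\<delta> and k=m and x=y, OF nonempty] unfolding m_def by fastforce
    have pb: "pref Y n = take n (dill_blocks \<delta> f y m)" unfolding Y_def
      using pref_dill[where f=f and \<delta>=\<delta>, OF nonempty lm] .
    have pr: "prefix b (pref Y n) \<or> prefix (pref Y n) b"
      unfolding pb b_def
      by (rule prefix_same_cases[OF blocks_prefix take_is_prefix]) (simp add: m_def)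
    have lb: "lev b (pref Y n) \<le> \<bar>real n - real (length b)\<bar> / 2"
      using lev_prefix_abs[OF pr] by simp
    have cm: "lev a b \<le> e l * S - \<bar>real (length a) - real (length b)\<bar> / 2"
    proof -
      have fx: "fstar \<delta> f (pref x l) = a" unfolding l_def a_def by (rule fstar_pref[OF diam])
      have fy: "fstar \<delta> f (pref y l) = b" unfolding l_def b_def by (rule fstar_pref[OF diam])
      show ?thesis using common[OF bound1 bound2, of "pref x l" l "pref y l"]
        unfolding e_def S_def fx fy by simp
    qed
    have na: "length a = n" unfolding a_def n_def Nx_def by simp
    have "D n \<le> lev a b + lev b (pref Y n)" unfolding D_def pa by (rule lev_tri)
    then show ?thesis using lb cm unfolding na unfolding n_def l_def by argo
  qed
  have step: "m \<le> n \<Longrightarrow> D n \<le> D m + (real n - real m)" for m n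
    unfolding D_def by (rule step_lemma)
  have bound: "D n \<le> e (k + \<delta> - 1) * S + K" if "Nx k \<le> n" "n < Nx (Suc k)" for n k
  proof -
    have "real n - real (Nx k) \<le> K" using that Kb[of k] NSuc[of k] by simp
    then show ?thesis using step[OF that(1)] key[of k] by argo
  qed
  have e_ge: "0 \<le> e l" for l unfolding e_def by (rule lev_ge0)
  have e_le: "e l \<le> l" for l unfolding e_def by (rule lev_le_len) simp_all
  define G where "G = feldman x y"
  have G_def': "G = limsup (\<lambda>l. ereal (e l / real l))"
    unfolding G_def feldman_def e_def by simp
  have G1: "G \<le> 1" unfolding G_def'
  proof (rule Limsup_bounded, rule always_eventually, rule allI)
    fix l
    show "ereal (e l / real l) \<le> 1"
      using e_le[of l] e_ge[of l] by (cases "l = 0") (auto simp: divide_le_eq)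
  qed
  have G0: "0 \<le> G" unfolding G_def'
    by (rule le_Limsup) (auto simp: e_ge)
  obtain g0 where g0: "G = ereal g0" using G0 G1 by (cases G) auto
  have g00: "0 \<le> g0" using G0 g0 by simp
  have lhs: "feldman (dill \<delta> f x) (dill \<delta> f y) = limsup (\<lambda>n. ereal (D n / real n))"
    unfolding feldman_def D_def X_def Y_def by simp
  have main: "limsup (\<lambda>n. ereal (D n / real n)) \<le> ereal (c * g0) + ereal \<epsilon>" if eps: "\<epsilon> > 0" for \<epsilon>
  proof -
    define \<eta> where "\<eta> = \<epsilon> / (2 * (c + 1))"
    have eta0: "\<eta> > 0" unfolding \<eta>_def using eps c0 by simp
    have ceta: "c * \<eta> \<le> \<epsilon> / 2" unfolding \<eta>_def using eps c0 by (simp add: field_simps)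
    define r where "r = g0 + \<eta>"
    have r0: "r > 0" unfolding r_def using g00 eta0 by simp
    have "G < ereal r" unfolding g0 r_def using eta0 by simp
    then have "eventually (\<lambda>l. ereal (e l / real l) < ereal r) sequentially"
      unfolding G_def' by (rule Limsup_lessD)
    then obtain N0 where N0: "\<And>l. l \<ge> N0 \<Longrightarrow> e l / real l < r"
      unfolding eventually_sequentially by auto
    define k1 where "k1 = nat \<lceil>(S * r * (real \<delta> - 1) + K) / ((\<epsilon> / 2) * L)\<rceil> + N0 + 1"
    have "eventually (\<lambda>n. D n / real n \<le> c * r + \<epsilon> / 2) sequentially"
      unfolding eventually_sequentially
    proof (intro exI[of _ "K * (k1 + 1)"] allI impI)
      fix n assume n: "K * (k1 + 1) \<le> n"
      obtain k where k: "Nx k \<le> n" "n < Nx (Suc k)" using bracket[of Nx n] Nzero Nstrict by blast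
      have "K * (k1 + 1) < K * Suc k" using n k(2) Nup[of "Suc k"] by linarith
      then have kk: "k1 < k" using K1 by (simp del: mult_Suc_right)
      then have kN0: "k + \<delta> - 1 \<ge> N0" and k1: "k \<ge> 1" unfolding k1_def by auto
      have lpos: "real (k + \<delta> - 1) > 0" using k1 diam by simp
      have el: "e (k + \<delta> - 1) < r * real (k + \<delta> - 1)"
        using N0[OF kN0] lpos by (simp add: divide_less_eq)
      have Dn: "D n \<le> S * r * real (k + \<delta> - 1) + K"
      proof -
        have "e (k + \<delta> - 1) * S \<le> (r * real (k + \<delta> - 1)) * S"
          using el S0 by (intro mult_right_mono) auto
        then show ?thesis using bound[OF k] by (simp add: algebra_simps)
      qed
      have rd: "real (k + \<delta> - 1) = real k + (real \<delta> - 1)" using k1 diam by simp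
      have "(S * r * (real \<delta> - 1) + K) / ((\<epsilon> / 2) * L) \<le> real k1"
        unfolding k1_def by linarith
      then have "(S * r * (real \<delta> - 1) + K) / ((\<epsilon> / 2) * L) \<le> real k" using kk by simp
      then have A: "S * r * (real \<delta> - 1) + K \<le> (\<epsilon> / 2) * L * real k"
        using eps Lpos by (simp add: divide_le_eq mult.commute mult.left_commute)
      have B: "S * r * real k = c * r * L * real k" unfolding c_def using Lpos by simp
      have Dn': "D n \<le> S * r * real k + (S * r * (real \<delta> - 1) + K)"
        using Dn unfolding rd distrib_left by argo
      have E: "(c * r + \<epsilon> / 2) * (L * real k) = S * r * real k + (\<epsilon> / 2) * L * real k"
      proof -
        have E1: "c * r * (L * real k) = S * r * real k" unfolding c_def using Lpos by simp
        show ?thesis unfolding distrib_right E1 by simp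
      qed
      have Lkn: "L * real k \<le> real n" using Nlow[of k] k(1) by (meson of_nat_le_iff order_trans)
      have cr0: "0 \<le> c * r + \<epsilon> / 2" using c0 r0 eps by simp
      have "D n \<le> (c * r + \<epsilon> / 2) * (L * real k)"
        unfolding E using Dn' A by argo
      also have "\<dots> \<le> (c * r + \<epsilon> / 2) * real n"
        using Lkn cr0 by (rule mult_left_mono)
      finally have Dn2: "D n \<le> (c * r + \<epsilon> / 2) * real n" .
      have "0 < L * real k" using Lpos k1 by simp
      then have "real n > 0" using Lkn by linarith
      then show "D n / real n \<le> c * r + \<epsilon> / 2" using Dn2 by (simp add: divide_le_eq)
    qed
    then have "limsup (\<lambda>n. ereal (D n / real n)) \<le> ereal (c * r + \<epsilon> / 2)"
      by (intro Limsup_bounded) (auto elim: eventually_mono)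
    also have "c * r + \<epsilon> / 2 \<le> c * g0 + \<epsilon>" unfolding r_def using ceta by (simp add: algebra_simps)
    finally show ?thesis by simp
  qed
  have "limsup (\<lambda>n. ereal (D n / real n)) \<le> ereal (c * g0)"
    by (rule ereal_le_epsilon2) (rule main)
  then show ?thesis unfolding lhs G_def[symmetric] g0 c_def S_def by simp
qed

end
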